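(* For every $n\ge 0$ and every $2^n$-mode raw LOPP-circuit $C$, $$[\![D(C)]\!]\circ\mathfrak G_n=\mathfrak G_n\circ[\![C]\!].$$
   Context: Raw LOPP-circuits. These are terms generated from $\mathrm{ph}(\varphi)$ ($1$ mode), $\mathrm{bs}(\theta)$ ($2$ modes), $\mathrm{id}$ ($1$ mode), $\mathrm{sw}$ ($2$ modes) and the empty circuit ($0$ modes), combined by $\circ$ (same number of modes) and $\otimes$ (stacking, the first factor on top). Their semantics $[\![C]\!]$ is a matrix on $\mathbb C^m$ ($m$ modes), with $[\![C_2\circ C_1]\!]=[\![C_2]\!][\![C_1]\!]$, $[\![C_1\otimes C_2]\!]=[\![C_1]\!]\oplus[\![C_2]\!]$, and: - $[\![\mathrm{ph}(\varphi)]\!]=(e^{i\varphi})$; - $[\![\mathrm{bs}(\theta)]\!]=\begin{pmatrix}\cos\theta&i\sin\theta\\i\sin\theta&\cos\theta\end{pmatrix}$; - $[\![\mathrm{sw}]\!]=\begin{pmatrix}0&1\\1&0\end{pmatrix}$; - $[\![\mathrm{id}]\!]=(1)$. Gray code. $G_0(0)=\epsilon$, and $G_n(k)=0G_{n-1}(k)$ if $k<2^{n-1}$, while $G_n(k)=1G_{n-1}(2^n-1-k)$ if $k\ge2^{n-1}$. The map $\mathfrak G_n:\mathbb C^{2^n}\to\mathbb C^{\{0,1\}^n}$ is $|k\rangle\mapsto|G_n(k)\rangle$. For $0\le k\le 2^n-2$, define bit strings $x_{k,n},y_{k,n}$ as follows: - if $k=2j$, then $x_{k,n}=G_{n-1}(j)$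 and $y_{k,n}=\epsilon$; - if $k=2j+1$, write $G_n(k)=w\,a\,1\,0^q$ with $q\in\{0,\dots,n-2\}$, $a\in\{0,1\}$, $w\in\{0,1\}^{n-q-2}$, and set $x_{k,n}=w$ and $y_{k,n}=10^q$. Controlled operators. For bit strings $x,y$ with $|x|+|y|=n-1$ and a $2\times2$ matrix $A$, let $\Lambda^x_yA$ be the operator on $\mathbb C^{\{0,1\}^n}$ with $$\Lambda^x_yA\,|u,a,v\rangle=\begin{cases}|u\rangle\otimes A|a\rangle\otimes|v\rangle&\text{if }uv=xy,\\ |u,a,v\rangle&\text{otherwise},\end{cases}$$ where $|u|=|x|$ and $|v|=|y|$. For $z\in\{0,1\}^n$, let $\Lambda^z s(\varphi)$ multiply $|z\rangle$ by $e^{i\varphi}$ and fix every other basis vector. Decoding semantics. For a raw LOPP-circuit $C$ on $\ell$ modes and $k$ with $k+\ell\le2^n$, define an operator $[\![D_{k,n}(C)]\!]$ on $\mathbb C^{\{0,1\}^n}$ inductively: - $[\![D_{k,n}(C_1\otimes C_2)]\!]=[\![D_{k+\ell_1,n}(C_2)]\!]\,[\![D_{k,n}(C_1)]\!]$, where $C_1$ has $\ell_1$ modes; - $[\![D_{k,n}(C_2\circ C_1)]\!]=[\![D_{k,n}(C_2)]\!]\,[\![D_{k,n}(C_1)]\!]$; - $\mathrm{id}$ and the empty circuit give the identity; - $[\![D_{k,n}(\mathrm{ph}(\varphi))]\!]=\Lambda^{G_n(k)}s(\varphi)$; - $[\![D_{k,n}(\mathrm{sw})]\!]=\Lambda^{x_{k,n}}_{y_{k,n}}X$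 with $X=\begin{pmatrix}0&1\\1&0\end{pmatrix}$; - $[\![D_{k,n}(\mathrm{bs}(\theta))]\!]=\Lambda^{x_{k,n}}_{y_{k,n}}R_X(-2\theta)$, where $R_X(\alpha)=\begin{pmatrix}\cos\frac\alpha2&-i\sin\frac\alpha2\\-i\sin\frac\alpha2&\cos\frac\alpha2\end{pmatrix}$. Finally $[\![D(C)]\!]:=[\![D_{0,n}(C)]\!]$. This is the semantics of the decoded quantum circuit $D(C)$. *)

theory Defs
  imports Complex_Main
begin

datatype lopp = PH real | BS real | ID | SW | EMPTY
  | Seq lopp lopp   (* Seq C2 C1 = C2 \<circ> C1 *)
  | Par lopp lopp   (* Par C1 C2 = C1 \<otimes> C2, C1 on top *)

fun modes :: "lopp \<Rightarrow> nat" where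
  "modes (PH _) = 1"
| "modes (BS _) = 2"
| "modes ID = 1"
| "modes SW = 2"
| "modes EMPTY = 0"
| "modes (Seq C2 C1) = modes C1"
| "modes (Par C1 C2) = modes C1 + modes C2"

fun wf_lopp :: "lopp \<Rightarrow> bool" where
  "wf_lopp (Seq C2 C1) = (wf_lopp C2 \<and> wf_lopp C1 \<and> modes C2 = modes C1)"
| "wf_lopp (Par C1 C2) = (wf_lopp C1 \<and> wf_lopp C2)"
| "wf_lopp _ = True"

text \<open>Semantics: an m x m complex matrix, given by its entries (0 outside the range).\<close>
fun sem :: "lopp \<Rightarrow> nat \<Rightarrow> nat \<Rightarrow> complex" where
  "sem (PH \<phi>) = (\<lambda>i j. if i = 0 \<and> j = 0 then exp (\<i> * of_real \<phi>) else 0)"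
| "sem (BS \<theta>) = (\<lambda>i j. if i < 2 \<and> j < 2 then
       (if i = j then of_real (cos \<theta>) else \<i> * of_real (sin \<theta>)) else 0)"
| "sem SW = (\<lambda>i j. if i < 2 \<and> j < 2 \<and> i \<noteq> j then 1 else 0)"
| "sem ID = (\<lambda>i j. if i = 0 \<and> j = 0 then 1 else 0)"
| "sem EMPTY = (\<lambda>i j. 0)"
| "sem (Seq C2 C1) = (\<lambda>i j. \<Sum>k<modes C1. sem C2 i k * sem C1 k j)"
| "sem (Par C1 C2) = (\<lambda>i j. if i < modes C1 \<and> j < modes C1 then sem C1 i j
       else if modes C1 \<le> i \<and> modes C1 \<le> j then sem C2 (i - modes C1) (j - modes C1)
       else 0)"

definition matvec :: "nat \<Rightarrow> (nat \<Rightarrow> nat \<Rightarrow> complex) \<Rightarrow> (nat \<Rightarrow> complex) \<Rightarrow> (nat \<Rightarrow> complex)" where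
  "matvec m M v = (\<lambda>i. if i < m then (\<Sum>j<m. M i j * v j) else 0)"

text \<open>Bit strings are lists of booleans, False = 0, True = 1.\<close>
fun gray :: "nat \<Rightarrow> nat \<Rightarrow> bool list" where
  "gray 0 k = []"
| "gray (Suc n) k = (if k < 2 ^ n then False # gray n k
                     else True # gray n (2 ^ Suc n - 1 - k))"

text \<open>The map \<open>\<complex>^{2^n} \<rightarrow> \<complex>^{{0,1}^n}\<close>, \<open>|k> \<mapsto> |G_n(k)>\<close>, extended linearly.\<close>
definition gray_map :: "nat \<Rightarrow> (nat \<Rightarrow> complex) \<Rightarrow> (bool list \<Rightarrow> complex)" where
  "gray_map n v = (\<lambda>z. \<Sum>k<2 ^ n. if gray n k = z then v k else 0)"

definition trailing_zeros :: "bool list \<Rightarrow> nat" where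
  "trailing_zeros g = length (takeWhile Not (rev g))"

text \<open>x_{k,n}, y_{k,n}. For odd k, G_n(k) = w a 1 0^q, x = w, y = 1 0^q.\<close>
definition xs_kn :: "nat \<Rightarrow> nat \<Rightarrow> bool list" where
  "xs_kn k n = (if even k then gray (n - 1) (k div 2)
               else (let g = gray n k; q = trailing_zeros g in take (n - q - 2) g))"

definition ys_kn :: "nat \<Rightarrow> nat \<Rightarrow> bool list" where
  "ys_kn k n = (if even k then []
               else (let q = trailing_zeros (gray n k) in True # replicate q False))"

text \<open>Vectors of \<open>\<complex>^{{0,1}^n}\<close> are functions \<open>bool list \<Rightarrow> complex\<close> (only strings of length n
  matter); operators are maps between such functions. A 2x2 matrix is \<open>bool \<Rightarrow> bool \<Rightarrow> complex\<close>
  (row, column).\<close>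

definition ctrl :: "bool list \<Rightarrow> bool list \<Rightarrow> (bool \<Rightarrow> bool \<Rightarrow> complex)
                    \<Rightarrow> (bool list \<Rightarrow> complex) \<Rightarrow> (bool list \<Rightarrow> complex)" where
  "ctrl x y A f = (\<lambda>w. let p = length x in
     if length w = length x + length y + 1 \<and> take p w @ drop (p + 1) w = x @ y
     then A (w ! p) False * f (w[p := False]) + A (w ! p) True * f (w[p := True])
     else f w)"

definition phase_ctrl :: "bool list \<Rightarrow> real \<Rightarrow> (bool list \<Rightarrow> complex) \<Rightarrow> (bool list \<Rightarrow> complex)" where
  "phase_ctrl z \<phi> f = (\<lambda>w. if w = z then exp (\<i> * of_real \<phi>) * f w else f w)"

definition pauliX :: "bool \<Rightarrow> bool \<Rightarrow> complex" where
  "pauliX b a = (if b \<noteq> a then 1 else 0)"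

definition RX :: "real \<Rightarrow> bool \<Rightarrow> bool \<Rightarrow> complex" where
  "RX \<alpha> b a = (if b = a then of_real (cos (\<alpha> / 2)) else - \<i> * of_real (sin (\<alpha> / 2)))"

fun dec :: "nat \<Rightarrow> nat \<Rightarrow> lopp \<Rightarrow> (bool list \<Rightarrow> complex) \<Rightarrow> (bool list \<Rightarrow> complex)" where
  "dec k n (Par C1 C2) = dec (k + modes C1) n C2 \<circ> dec k n C1"
| "dec k n (Seq C2 C1) = dec k n C2 \<circ> dec k n C1"
| "dec k n ID = (\<lambda>f. f)"
| "dec k n EMPTY = (\<lambda>f. f)"
| "dec k n (PH \<phi>) = phase_ctrl (gray n k) \<phi>"
| "dec k n SW = ctrl (xs_kn k n) (ys_kn k n) pauliX"
| "dec k n (BS \<theta>) = ctrl (xs_kn k n) (ys_kn k n) (RX (-2 * \<theta>))"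

end

theory Submission
  imports Defs
begin

lemma gray_Suc: "k < 2^Suc n \<Longrightarrow> gray (Suc n) k = gray n (k div 2) @ [odd k \<noteq> odd (k div 2)]"
proof (induction n arbitrary: k)
  case 0
  then have "k = 0 \<or> k = 1" by auto
  then show ?case by auto
next
  case (Suc n)
  define Q :: nat where "Q = 2^n"
  have Q: "Q \<ge> 1" "2^Suc n = 2*Q" "2^Suc (Suc n) = 4*Q" unfolding Q_def by auto
  show ?case
  proof (cases "k < 2^Suc n")
    case True
    then have "k div 2 < 2^n" by auto
    then show ?thesis using True Suc.IH[OF True] by simp
  next
    case False
    define k' where "k' = 2^Suc (Suc n) - 1 - k"
    have k'lt: "k' < 2^Suc n" using False Suc.prems Q unfolding k'_def by linarith
    have h1: "k' div 2 = 2^Suc n - 1 - k div 2" using False Suc.prems Q unfolding k'_def by (simp; presburger)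
    have h2: "odd k' = (\<not> odd k)" using False Suc.prems Q unfolding k'_def by (simp; presburger)
    have h3: "odd (k' div 2) = (\<not> odd (k div 2))" using False Suc.prems Q unfolding h1 by (simp; presburger)
    have h4: "\<not> k div 2 < 2^n" using False Q Q_def by simp
    have "gray (Suc (Suc n)) k = True # gray (Suc n) k'" using False unfolding k'_def by simp
    also have "\<dots> = True # gray n (k' div 2) @ [odd k' \<noteq> odd (k' div 2)]" using Suc.IH[OF k'lt] by simp
    also have "\<dots> = gray (Suc n) (k div 2) @ [odd k \<noteq> odd (k div 2)]"
      using h4 h1 h2 h3 by simp
    finally show ?thesis .
  qed
qed

lemma length_gray[simp]: "length (gray n k) = n"
  by (induction n arbitrary: k) auto

lemma gray_inj: "a < 2^n \<Longrightarrow> b < 2^n \<Longrightarrow> gray n a = gray n b \<Longrightarrow> a = b"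
proof (induction n arbitrary: a b)
  case 0 then show ?case by simp
next
  case (Suc n)
  have "a div 2 < 2^n" "b div 2 < 2^n" using Suc.prems by auto
  moreover have e: "gray n (a div 2) = gray n (b div 2) \<and> (odd a \<noteq> odd (a div 2)) = (odd b \<noteq> odd (b div 2))"
    using Suc.prems(3) unfolding gray_Suc[OF Suc.prems(1)] gray_Suc[OF Suc.prems(2)] by simp
  ultimately have "a div 2 = b div 2" using Suc.IH by blast
  with e have "odd a = odd b" by metis
  with \<open>a div 2 = b div 2\<close> show ?case by presburger
qed

lemma gray_even: "even j \<Longrightarrow> j + 1 < 2^m \<Longrightarrow> gray m (j+1) = (gray m j)[m-1 := \<not> (gray m j ! (m-1))]"
proof (cases m)
  case 0
  assume "j + 1 < 2^m" then show ?thesis using 0 by simp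
next
  case (Suc m')
  assume a: "even j" "j + 1 < 2^m"
  have "(j+1) div 2 = j div 2" "odd (j+1)" using a by presburger+
  then show ?thesis using a Suc gray_Suc[of j m'] gray_Suc[of "j+1" m']
    by (simp add: list_update_append nth_append)
qed

lemma tz_False[simp]: "trailing_zeros (xs @ [False]) = Suc (trailing_zeros xs)"
  by (simp add: trailing_zeros_def)
lemma tz_True[simp]: "trailing_zeros (xs @ [True]) = 0"
  by (simp add: trailing_zeros_def)

lemma gray_odd: "odd k \<Longrightarrow> k + 1 < 2^m \<Longrightarrow>
  trailing_zeros (gray m k) + 2 \<le> m \<and> gray m k ! (m - trailing_zeros (gray m k) - 1) = True \<and>
  gray m (k+1) = (gray m k)[m - trailing_zeros (gray m k) - 2 := \<not> (gray m k ! (m - trailing_zeros (gray m k) - 2))]"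
proof (induction m arbitrary: k)
  case 0 then show ?case by simp
next
  case (Suc m')
  obtain j where kj: "k = 2*j+1" using Suc.prems(1) oddE by blast
  have jl: "j + 1 < 2^m'" using Suc.prems(2) kj by simp
  have g1: "gray (Suc m') k = gray m' j @ [\<not> odd j]"
    using gray_Suc[of k m'] Suc.prems kj by simp
  have g2: "gray (Suc m') (k+1) = gray m' (j+1) @ [\<not> odd j]"
    using gray_Suc[of "k+1" m'] Suc.prems kj by simp
  show ?case
  proof (cases "even j")
    case True
    have m': "m' \<ge> 1" using jl by (cases m') auto
    have "gray m' (j+1) = (gray m' j)[m'-1 := \<not> (gray m' j ! (m'-1))]" using gray_even[OF True jl] .
    then show ?thesis unfolding g1 g2 using True m' by (simp add: list_update_append nth_append)
  next
    case False
    then have oj: "odd j" by simp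
    note IH = Suc.IH[OF oj jl]
    define q where "q = trailing_zeros (gray m' j)"
    have "q + 2 \<le> m'" using IH q_def by simp
    then show ?thesis unfolding g1 g2 using oj IH
      by (simp add: list_update_append nth_append)
  qed
qed

lemma tz_drop: "trailing_zeros g \<le> length g \<and> drop (length g - trailing_zeros g) g = replicate (trailing_zeros g) False"
proof -
  have r: "rev g = takeWhile Not (rev g) @ dropWhile Not (rev g)" by simp
  have "takeWhile Not (rev g) = replicate (length (takeWhile Not (rev g))) False"
    by (metis (full_types) replicate_length_same set_takeWhileD)
  then have "g = rev (dropWhile Not (rev g)) @ replicate (trailing_zeros g) False"
    using r unfolding trailing_zeros_def by (metis rev_append rev_replicate rev_rev_ident)
  then show ?thesis unfolding trailing_zeros_def
    by (metis append_eq_conv_conj diff_add_inverse2 le_add2 length_append length_replicate)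
qed

lemma xy_facts: assumes "k + 1 < 2^n"
  shows "length (xs_kn k n) + length (ys_kn k n) + 1 = n \<and>
    gray n (k+1) = (gray n k)[length (xs_kn k n) := \<not> (gray n k ! length (xs_kn k n))] \<and>
    take (length (xs_kn k n)) (gray n k) @ drop (Suc (length (xs_kn k n))) (gray n k) = xs_kn k n @ ys_kn k n"
proof (cases "even k")
  case True
  obtain m where n: "n = Suc m" using assms by (cases n) auto
  obtain j where kj: "k = 2*j" using True by blast
  have g: "gray n k = gray m j @ [odd j]" using gray_Suc[of k m] assms n kj by simp
  have "(k+1) div 2 = j" using kj by simp
  then have g': "gray n (k+1) = gray m j @ [\<not> odd j]" using gray_Suc[of "k+1" m] assms n kj by simp
  have x: "xs_kn k n = gray m j" "ys_kn k n = []" using True kj n by (simp_all add: xs_kn_def ys_kn_def)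
  show ?thesis unfolding x g g' by (simp add: list_update_append nth_append n)
next
  case False
  define g where "g = gray n k"
  define q where "q = trailing_zeros g"
  have G: "q + 2 \<le> n" "g ! (n - q - 1)" "gray n (k+1) = g[n - q - 2 := \<not> (g ! (n - q - 2))]"
    using gray_odd[OF _ assms] False unfolding g_def q_def by auto
  have x: "xs_kn k n = take (n-q-2) g" "ys_kn k n = True # replicate q False"
    using False by (simp_all add: xs_kn_def ys_kn_def g_def q_def Let_def)
  have lx: "length (xs_kn k n) = n - q - 2" using G(1) unfolding x by (simp add: g_def)
  have d: "drop (n - q) g = replicate q False" using tz_drop[of g] unfolding q_def g_def by simp
  have "drop (Suc (n - q - 2)) g = True # replicate q False"
    using Cons_nth_drop_Suc[of "n-q-1" g] G(1,2) d by (simp add: g_def Suc_diff_Suc numeral_2_eq_2)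
  then show ?thesis unfolding lx using G unfolding x by (simp add: g_def)
qed

lemma sum_split_add: "(\<Sum>j<a+b. f j) = (\<Sum>j<a. f j) + (\<Sum>j<b. f (a+j))" for f :: "nat \<Rightarrow> complex"
  by (induction b) (simp_all add: add.assoc)

lemma gm_at: "k < 2^n \<Longrightarrow> gray_map n v (gray n k) = v k"
proof -
  assume k: "k < 2^n"
  have "gray_map n v (gray n k) = (\<Sum>i<2^n. if i = k then v i else 0)"
    unfolding gray_map_def using gray_inj[OF _ k] by (intro sum.cong) auto
  then show ?thesis using k by simp
qed

lemma gm_cong: "(\<And>i. i < 2^n \<Longrightarrow> gray n i = w \<Longrightarrow> v i = v' i) \<Longrightarrow> gray_map n v w = gray_map n v' w"
  unfolding gray_map_def by (intro sum.cong) auto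

lemma eq_upd: "length w = length g \<Longrightarrow> p < length g \<Longrightarrow>
  take p w @ drop (Suc p) w = take p g @ drop (Suc p) g \<Longrightarrow> w = g[p := w!p]"
proof -
  assume a: "length w = length g" "p < length g" "take p w @ drop (Suc p) w = take p g @ drop (Suc p) g"
  then have "take p w = take p g" "drop (Suc p) w = drop (Suc p) g"
    by (simp_all add: append_eq_append_conv)
  then show ?thesis using a by (metis id_take_nth_drop upd_conv_take_nth_drop)
qed

lemma ctrl_gm: assumes k: "k+1 < 2^n" and A: "\<And>b. A b b = a" "\<And>b. A b (\<not>b) = c"
  shows "ctrl (xs_kn k n) (ys_kn k n) A (gray_map n v) = gray_map n (\<lambda>i. if i = k then a*v k + c*v(k+1) else if i = k+1 then c * v k + a * v(k+1) else v i)"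
    (is "_ = gray_map n ?v'")
proof
  fix w
  define x where "x = xs_kn k n"
  define y where "y = ys_kn k n"
  define p where "p = length x"
  define g where "g = gray n k"
  note F = xy_facts[OF k, folded x_def y_def p_def g_def]
  have len: "length x + length y + 1 = n" and g': "gray n (k+1) = g[p := \<not> g!p]"
    and tg: "take p g @ drop (Suc p) g = x @ y" using F unfolding p_def by blast+
  have pl: "p < length g" using len unfolding p_def g_def by simp
  have k1: "k < 2^n" using k by simp
  have fupd: "gray_map n v (g[p:=b]) = (if b = g!p then v k else v (k+1))" for b
    using gm_at[OF k1] gm_at[OF k] g' unfolding g_def by auto
  have fupd': "gray_map n ?v' (g[p:=b]) = (if b = g!p then ?v' k else ?v' (k+1))" for b
    using gm_at[OF k1] gm_at[OF k] g' unfolding g_def by auto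
  have AA: "A True True = a" "A False False = a" "A True False = c" "A False True = c"
    using A[of True] A[of False] by auto
  show "ctrl x y A (gray_map n v) w = gray_map n ?v' w"
  proof (cases "length w = length x + length y + 1 \<and> take p w @ drop (p + 1) w = x @ y")
    case True
    then have w: "w = g[p := w!p]" using eq_upd[of w g p] len tg pl unfolding g_def by simp
    have "ctrl x y A (gray_map n v) w = A (w ! p) False * gray_map n v (g[p := False]) + A (w ! p) True * gray_map n v (g[p := True])"
    proof -
      have wF: "w[p:=b] = g[p:=b]" for b by (subst w) simp
      show ?thesis unfolding ctrl_def Let_def p_def[symmetric] using True wF[unfolded p_def] by (simp add: p_def)
    qed
    also have "\<dots> = gray_map n ?v' w"
      unfolding fupd fupd'[of "w!p", folded w] by (cases "g!p"; cases "w!p") (simp_all add: AA)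
    finally show ?thesis .
  next
    case False
    have lg: "length g = n" by (simp add: g_def)
    have "w \<noteq> g" using False len tg lg p_def by auto
    moreover have wne: "w \<noteq> g[p := \<not> g!p]" using False len tg pl lg p_def
      by (auto simp: take_update_cancel drop_update_cancel)
    ultimately have "gray_map n v w = gray_map n ?v' w"
    proof (intro gm_cong)
      fix i assume "i < 2^n" "gray n i = w"
      moreover have "w \<noteq> gray n (k+1)" using wne g' by simp
      ultimately show "v i = ?v' i" using \<open>w \<noteq> g\<close> g_def by auto
    qed
    then show ?thesis unfolding ctrl_def Let_def by (simp only: False[unfolded p_def] if_False)
  qed
qed

definition app :: "nat \<Rightarrow> nat \<Rightarrow> (nat \<Rightarrow> nat \<Rightarrow> complex) \<Rightarrow> (nat \<Rightarrow> complex) \<Rightarrow> nat \<Rightarrow> complex" where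
  "app k l M v = (\<lambda>i. if k \<le> i \<and> i < k + l then (\<Sum>j<l. M (i-k) j * v (k+j)) else v i)"

lemma app_seq: "app k l M2 (app k l M1 v) = app k l (\<lambda>i j. \<Sum>m<l. M2 i m * M1 m j) v"
proof
  fix i
  show "app k l M2 (app k l M1 v) i = app k l (\<lambda>i j. \<Sum>m<l. M2 i m * M1 m j) v i"
  proof (cases "k \<le> i \<and> i < k + l")
    case True
    have "app k l M2 (app k l M1 v) i = (\<Sum>j<l. M2 (i-k) j * (\<Sum>m<l. M1 j m * v (k+m)))"
      using True unfolding app_def by simp
    also have "\<dots> = (\<Sum>j<l. \<Sum>m<l. M2 (i-k) j * M1 j m * v (k+m))"
      by (simp add: sum_distrib_left mult.assoc)
    also have "\<dots> = (\<Sum>m<l. \<Sum>j<l. M2 (i-k) j * M1 j m * v (k+m))"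
      by (rule sum.swap)
    also have "\<dots> = app k l (\<lambda>i j. \<Sum>m<l. M2 i m * M1 m j) v i"
      using True unfolding app_def by (simp add: sum_distrib_right)
    finally show ?thesis .
  next
    case False then show ?thesis unfolding app_def by auto
  qed
qed

lemma app_par: "app (k+l1) l2 M2 (app k l1 M1 v) = app k (l1+l2) (\<lambda>i j. if i < l1 \<and> j < l1 then M1 i j
       else if l1 \<le> i \<and> l1 \<le> j then M2 (i - l1) (j - l1) else 0) v"
proof
  fix i
  consider "k \<le> i \<and> i < k + l1" | "k + l1 \<le> i \<and> i < k + l1 + l2" | "\<not> (k \<le> i \<and> i < k + l1 + l2)" by linarith
  then show "app (k+l1) l2 M2 (app k l1 M1 v) i = app k (l1+l2) (\<lambda>i j. if i < l1 \<and> j < l1 then M1 i j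
       else if l1 \<le> i \<and> l1 \<le> j then M2 (i - l1) (j - l1) else 0) v i"
  proof cases
    case 1
    then have "i - k < l1" "\<not> (k + l1 \<le> i)" "\<not> l1 \<le> i - k" by auto
    then show ?thesis using 1 unfolding app_def by (simp add: sum_split_add)
  next
    case 2
    then have "\<not> i - k < l1" "l1 \<le> i - k" "i - k - l1 = i - (k + l1)" "\<not> i < k + l1" by auto
    then show ?thesis using 2 unfolding app_def by (simp add: sum_split_add add.assoc)
  next
    case 3
    then show ?thesis unfolding app_def by auto
  qed
qed

lemma main: "wf_lopp C \<Longrightarrow> k + modes C \<le> 2^n \<Longrightarrow>
  dec k n C (gray_map n v) = gray_map n (app k (modes C) (sem C) v)"
proof (induction C arbitrary: k v)
  case (PH \<phi>)
  show ?case
  proof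
    fix w
    show "dec k n (PH \<phi>) (gray_map n v) w = gray_map n (app k (modes (PH \<phi>)) (sem (PH \<phi>)) v) w"
    proof (cases "w = gray n k")
      case True
      have k: "k < 2^n" using PH by simp
      show ?thesis using True gm_at[OF k] gm_at[OF k, of "app k 1 (sem (PH \<phi>)) v"]
        by (simp add: phase_ctrl_def app_def)
    next
      case False
      then have "dec k n (PH \<phi>) (gray_map n v) w = gray_map n v w" by (simp add: phase_ctrl_def)
      also have "\<dots> = gray_map n (app k (modes (PH \<phi>)) (sem (PH \<phi>)) v) w"
      proof (rule gm_cong)
        fix i assume "i < 2^n" "gray n i = w"
        then have "i \<noteq> k" using False by auto
        then show "v i = app k (modes (PH \<phi>)) (sem (PH \<phi>)) v i" by (auto simp: app_def)
      qed
      finally show ?thesis .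
    qed
  qed
next
  case (BS \<theta>)
  have k: "k + 1 < 2^n" using BS by simp
  have "dec k n (BS \<theta>) (gray_map n v) = gray_map n (\<lambda>i. if i = k then of_real (cos \<theta>)*v k + (\<i> * of_real (sin \<theta>))*v(k+1) else if i = k+1 then (\<i> * of_real (sin \<theta>)) * v k + of_real (cos \<theta>) * v(k+1) else v i)"
    by simp (rule ctrl_gm[OF k], simp_all add: RX_def)
  also have "\<dots> = gray_map n (app k (modes (BS \<theta>)) (sem (BS \<theta>)) v)"
    apply (rule arg_cong[where f="gray_map n"], rule ext)
    subgoal for i by (cases "i = k \<or> i = Suc k") (auto simp: app_def numeral_2_eq_2)
    done
  finally show ?case .
next
  case SW
  have k: "k + 1 < 2^n" using SW by simp
  have "dec k n SW (gray_map n v) = gray_map n (\<lambda>i. if i = k then 0*v k + 1*v(k+1) else if i = k+1 then 1 * v k + 0 * v(k+1) else v i)"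
    by simp (rule ctrl_gm[OF k], simp_all add: pauliX_def)
  also have "\<dots> = gray_map n (app k (modes SW) (sem SW) v)"
    apply (rule arg_cong[where f="gray_map n"], rule ext)
    subgoal for i by (cases "i = k \<or> i = Suc k") (auto simp: app_def numeral_2_eq_2)
    done
  finally show ?case .
next
  case ID
  have "app k 1 (sem ID) v = v"
    by (rule ext) (auto simp: app_def le_less_Suc_eq)
  then show ?case by simp
next
  case EMPTY
  have "app k 0 (sem EMPTY) v = v" by (rule ext) (auto simp: app_def)
  then show ?case by simp
next
  case (Seq C2 C1)
  then show ?case by (simp add: app_seq)
next
  case (Par C1 C2)
  then show ?case by (simp add: app_par)
qed

theorem mainTheorem6:
  fixes n :: nat and C :: lopp and v :: "nat \<Rightarrow> complex" and z :: "bool list"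
  assumes "wf_lopp C" and "modes C = 2 ^ n" and "length z = n"
  shows "dec 0 n C (gray_map n v) z = gray_map n (matvec (2 ^ n) (sem C) v) z"
proof -
  have "dec 0 n C (gray_map n v) = gray_map n (app 0 (2^n) (sem C) v)"
    using main[of C 0 n v] assms by simp
  then have "dec 0 n C (gray_map n v) z = gray_map n (app 0 (2^n) (sem C) v) z" by simp
  also have "\<dots> = gray_map n (matvec (2 ^ n) (sem C) v) z"
    by (rule gm_cong) (auto simp: app_def matvec_def)
  finally show ?thesis .
qed

end
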